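(* Let $R$ be a ring with identity and $a\in R$. Then $a$ is pseudopolar if and only if $a=s+q$ where $s$ is strongly regular, $s\in\mathrm{comm}^2(a)$, $q\in J^\#(R)$, and $sq=qs=0$.
   Context: $J(R)$ is the Jacobson radical and $U(R)$ the unit group of $R$; $J^\#(R)=\{x\in R\mid x^n\in J(R)\text{ for some }n\in\mathbb{N}\}$. $\mathrm{comm}(a)=\{x\in R\mid xa=ax\}$, $\mathrm{comm}^2(a)=\{x\in R\mid xy=yx\text{ for all }y\in\mathrm{comm}(a)\}$. An element $a\in R$ is pseudopolar if there exist an idempotent $p\in\mathrm{comm}^2(a)$ and $k\in\mathbb{N}$ with $a+p\in U(R)$ and $a^kp\in J(R)$. An element $s$ is strongly regular if $s=sbs$ for some $b\in R$ with $bs=sb$. *)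

theory Defs
  imports Main
begin

definition unit_el :: "'a::ring_1 \<Rightarrow> bool" where
  "unit_el u \<longleftrightarrow> (\<exists>v. u * v = 1 \<and> v * u = 1)"

text \<open>Jacobson radical, via the standard elementwise characterization
  x in J(R) iff 1 - r x is a unit for every r.\<close>
definition jacobson :: "'a::ring_1 set" where
  "jacobson = {x. \<forall>r. unit_el (1 - r * x)}"

definition jsharp :: "'a::ring_1 set" where
  "jsharp = {x. \<exists>n::nat. n \<ge> 1 \<and> x ^ n \<in> jacobson}"

definition comm :: "'a::ring_1 \<Rightarrow> 'a set" where
  "comm a = {x. x * a = a * x}"

definition comm2 :: "'a::ring_1 \<Rightarrow> 'a set" where
  "comm2 a = {x. \<forall>y\<in>comm a. x * y = y * x}"

definition pseudopolar :: "'a::ring_1 \<Rightarrow> bool" where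
  "pseudopolar a \<longleftrightarrow> (\<exists>p (k::nat). k \<ge> 1 \<and> p * p = p \<and> p \<in> comm2 a \<and> unit_el (a + p)
                        \<and> a ^ k * p \<in> jacobson)"

definition strongly_regular :: "'a::ring_1 \<Rightarrow> bool" where
  "strongly_regular s \<longleftrightarrow> (\<exists>b. s = s * b * s \<and> b * s = s * b)"

end

theory Submission
  imports Defs
begin

lemma unit_mult:
  fixes x y :: "'a::ring_1"
  assumes "unit_el x" "unit_el y" shows "unit_el (x * y)"
proof -
  obtain u where u: "x*u = 1" "u*x = 1" using assms(1) unfolding unit_el_def by blast
  obtain v where v: "y*v = 1" "v*y = 1" using assms(2) unfolding unit_el_def by blast
  have "x*y*(v*u) = x*((y*v)*u)" by (simp only: mult.assoc)
  then have A: "x*y*(v*u) = 1" using u(1) v(1) by simp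
  have "(v*u)*(x*y) = v*((u*x)*y)" by (simp only: mult.assoc)
  then have B: "(v*u)*(x*y) = 1" using u(2) v(2) by simp
  note A
  moreover note B
  ultimately show ?thesis unfolding unit_el_def by blast
qed

lemma unit_from_factor:
  fixes x c z :: "'a::ring_1"
  assumes "x * c = z" "c * x = z" "unit_el z" shows "unit_el x"
proof -
  obtain w where w: "z*w = 1" "w*z = 1" using assms(3) unfolding unit_el_def by blast
  have r: "x*(c*w) = 1" using assms(1) w(1) by (simp add: mult.assoc[symmetric])
  have l: "(w*c)*x = 1" using assms(2) w(2) by (simp add: mult.assoc)
  have "w*c = c*w"
  proof -
    have "w*c = (w*c)*(x*(c*w))" using r by simp
    also have "\<dots> = ((w*c)*x)*(c*w)" by (simp add: mult.assoc)
    also have "\<dots> = c*w" using l by simp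
    finally show ?thesis .
  qed
  then have "(c*w)*x = 1" using l by simp
  then show ?thesis unfolding unit_el_def using r by blast
qed

lemma geom:
  fixes y :: "'a::ring_1"
  shows "(1 - y) * (\<Sum>i<n. y^i) = 1 - y^n \<and> (\<Sum>i<n. y^i) * (1 - y) = 1 - y^n"
proof (induction n)
  case 0 then show ?case by simp
next
  case (Suc n)
  have A: "(1 - y) * (\<Sum>i<Suc n. y^i) = (1 - y) * (\<Sum>i<n. y^i) + (1-y)*y^n"
    by (simp add: distrib_left)
  have B: "(\<Sum>i<Suc n. y^i) * (1 - y) = (\<Sum>i<n. y^i) * (1 - y) + y^n*(1-y)"
    by (simp add: distrib_right)
  have C: "(1-y)*y^n = y^n - y^Suc n" by (simp add: left_diff_distrib)
  have D: "y^n*(1-y) = y^n - y^Suc n" by (simp add: right_diff_distrib power_Suc2 power_commutes)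
  show ?case using A B C D Suc by simp
qed

lemma one_plus_jsharp:
  fixes q :: "'a::ring_1"
  assumes "q \<in> jsharp" shows "unit_el (1 + q)"
proof -
  obtain n where n: "n \<ge> 1" "q^n \<in> jacobson" using assms unfolding jsharp_def by blast
  have "unit_el (1 - (-1)^n * q^n)" using n(2) unfolding jacobson_def by blast
  then have U: "unit_el (1 - (-q)^n)" by (subst power_minus)
  have G1: "(1 - (-q)) * (\<Sum>i<n. (-q)^i) = 1 - (-q)^n" using geom[of "-q" n] by (rule conjunct1)
  have G2: "(\<Sum>i<n. (-q)^i) * (1 - (-q)) = 1 - (-q)^n" using geom[of "-q" n] by (rule conjunct2)
  have "unit_el (1 - (-q))" by (rule unit_from_factor[OF G1 G2 U])
  then show ?thesis by simp
qed

lemma comm_pow_mult: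
  fixes x p :: "'a::ring_1"
  assumes "x*p = p*x" "p*p = p" "k \<ge> 1"
  shows "(x*p)^k = x^k * p"
  using assms(3)
proof (induction k rule: dec_induct)
  case base then show ?case by simp
next
  case (step m)
  have "(x*p)^Suc m = x^m * p * (x*p)" by (simp only: power_Suc2 step.IH)
  also have "\<dots> = x^m * (p*x) * p" by (simp add: mult.assoc)
  also have "\<dots> = x^m * (x*p) * p" using assms(1) by simp
  also have "\<dots> = x^m * x * (p * p)" by (simp only: mult.assoc)
  also have "\<dots> = x^Suc m * p" by (simp only: assms(2) power_Suc2)
  finally show ?case .
qed

lemma a_comm2: "(a::'a::ring_1) \<in> comm2 a"
  unfolding comm2_def comm_def by auto

lemma comm2_diff: "x \<in> comm2 a \<Longrightarrow> y \<in> comm2 a \<Longrightarrow> x - y \<in> comm2 a"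
  unfolding comm2_def by (auto simp: algebra_simps)

lemma comm2_one: "1 \<in> comm2 a"
  unfolding comm2_def by auto

lemma comm2_mult: "x \<in> comm2 a \<Longrightarrow> y \<in> comm2 a \<Longrightarrow> x * y \<in> comm2 a"
  unfolding comm2_def
proof (intro CollectI ballI)
  fix z assume x: "x \<in> {x. \<forall>y\<in>comm a. x * y = y * x}" and y: "y \<in> {x. \<forall>y\<in>comm a. x * y = y * x}" and z: "z \<in> comm a"
  have xz: "x*z = z*x" using x z by auto
  have yz: "y*z = z*y" using y z by auto
  have "x*y*z = x*(y*z)" by (simp only: mult.assoc)
  also have "\<dots> = x*(z*y)" using yz by simp
  also have "\<dots> = (x*z)*y" by (simp only: mult.assoc)
  also have "\<dots> = (z*x)*y" using xz by simp
  also have "\<dots> = z*(x*y)" by (simp only: mult.assoc)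
  finally show "x*y*z = z*(x*y)" .
qed

theorem theorem4p1:
  fixes a :: "'a::ring_1"
  shows "pseudopolar a \<longleftrightarrow>
    (\<exists>s q. a = s + q \<and> strongly_regular s \<and> s \<in> comm2 a \<and> q \<in> jsharp
           \<and> s * q = 0 \<and> q * s = 0)"
proof
  assume "pseudopolar a"
  then obtain p k where k: "k \<ge> 1" and pp: "p*p = p" and pc: "p \<in> comm2 a"
    and u: "unit_el (a+p)" and J: "a^k * p \<in> jacobson" unfolding pseudopolar_def by blast
  have ap: "a*p = p*a" using pc unfolding comm2_def comm_def by auto
  define s where "s = a*(1-p)"
  define q where "q = a*p"
  have p1: "(1-p)*p = 0" using pp by (simp add: algebra_simps)
  have p2: "p*(1-p) = 0" using pp by (simp add: algebra_simps)
  have ap1: "(1-p)*a = a*(1-p)" using ap by (simp add: algebra_simps)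
  have "a = s + q" unfolding s_def q_def by (simp add: algebra_simps)
  moreover have "s \<in> comm2 a" unfolding s_def
    by (intro comm2_mult a_comm2 comm2_diff comm2_one pc)
  moreover have "q \<in> jsharp" unfolding jsharp_def q_def
    using comm_pow_mult[OF ap pp k] J k by auto
  moreover have "s*q = 0"
  proof -
    have "s*q = a*((1-p)*a)*p" unfolding s_def q_def by (simp add: mult.assoc)
    also have "\<dots> = a*(a*(1-p))*p" using ap1 by simp
    also have "\<dots> = a*a*((1-p)*p)" by (simp only: mult.assoc)
    finally show ?thesis using p1 by simp
  qed
  moreover have "q*s = 0"
  proof -
    have "q*s = a*(p*a)*(1-p)" unfolding s_def q_def by (simp add: mult.assoc)
    also have "\<dots> = a*(a*p)*(1-p)" using ap by simp
    also have "\<dots> = a*a*(p*(1-p))" by (simp only: mult.assoc)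
    finally show ?thesis using p2 by simp
  qed
  moreover have "strongly_regular s"
  proof -
    obtain v where v: "(a+p)*v = 1" "v*(a+p) = 1" using u unfolding unit_el_def by blast
    define w where "w = a+p"
    have wp: "w*p = p*w" unfolding w_def using ap by (simp add: algebra_simps)
    have vw: "v*w = 1" "w*v = 1" using v w_def by auto
    have vp: "v*p = p*v"
    proof -
      have "v*p = v*(p*w)*v" using vw by (simp add: mult.assoc)
      also have "\<dots> = v*(w*p)*v" using wp by simp
      also have "\<dots> = p*v" using vw by (simp add: mult.assoc[symmetric])
      finally show ?thesis .
    qed
    have sw: "s = w*(1-p)" unfolding s_def w_def using pp by (simp add: algebra_simps)
    define b where "b = v*(1-p)"
    have e: "(1-p)*(1-p) = 1-p" using pp by (simp add: algebra_simps)
    have wq: "w*(1-p) = (1-p)*w" using wp by (simp add: algebra_simps)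
    have vq: "v*(1-p) = (1-p)*v" using vp by (simp add: algebra_simps)
    have bs: "b*s = 1-p"
    proof -
      have "b*s = v*((1-p)*w)*(1-p)" unfolding b_def sw by (simp add: mult.assoc)
      also have "\<dots> = v*(w*(1-p))*(1-p)" using wq by simp
      also have "\<dots> = (v*w)*((1-p)*(1-p))" by (simp only: mult.assoc)
      finally show ?thesis using vw e by simp
    qed
    have sb: "s*b = 1-p"
    proof -
      have "s*b = w*((1-p)*v)*(1-p)" unfolding b_def sw by (simp add: mult.assoc)
      also have "\<dots> = w*(v*(1-p))*(1-p)" using vq by simp
      also have "\<dots> = (w*v)*((1-p)*(1-p))" by (simp only: mult.assoc)
      finally show ?thesis using vw e by simp
    qed
    have "s*b*s = s"
    proof -
      have "s*b*s = (1-p)*(w*(1-p))" using sb sw by simp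
      also have "\<dots> = (1-p)*((1-p)*w)" using wq by simp
      also have "\<dots> = ((1-p)*(1-p))*w" by (simp only: mult.assoc)
      also have "\<dots> = (1-p)*w" using e by simp
      finally show ?thesis using wq sw by simp
    qed
    then have "s = s*b*s \<and> b*s = s*b" using bs sb by simp
    then show ?thesis unfolding strongly_regular_def by blast
  qed
  ultimately show "\<exists>s q. a = s + q \<and> strongly_regular s \<and> s \<in> comm2 a \<and> q \<in> jsharp
           \<and> s * q = 0 \<and> q * s = 0" by blast
next
  assume "\<exists>s q. a = s + q \<and> strongly_regular s \<and> s \<in> comm2 a \<and> q \<in> jsharp
           \<and> s * q = 0 \<and> q * s = 0"
  then obtain s q where a: "a = s + q" and sr: "strongly_regular s" and sc: "s \<in> comm2 a"
    and qj: "q \<in> jsharp" and sq: "s*q = 0" and qs: "q*s = 0" by blast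
  obtain b where sbs: "s = s*b*s" and bs: "b*s = s*b" using sr unfolding strongly_regular_def by blast
  have sbs': "s*b*s = s" using sbs by simp
  define e where "e = s*b"
  have ee: "e*e = e" unfolding e_def by (simp only: mult.assoc[symmetric] sbs')
  have se: "s*e = s" unfolding e_def bs[symmetric] by (simp only: mult.assoc[symmetric] sbs')
  have es: "e*s = s" unfolding e_def by (rule sbs')
  have e1: "b*s = e" unfolding e_def using bs by simp
  have eq: "e*q = 0" unfolding e_def bs[symmetric] by (simp add: mult.assoc sq)
  have qe: "q*e = 0" unfolding e_def by (simp add: mult.assoc[symmetric] qs)
  have ec: "e \<in> comm2 a"
    unfolding comm2_def
  proof (intro CollectI ballI)
    fix y assume y: "y \<in> comm a"
    have ys: "y*s = s*y" using sc y unfolding comm2_def by auto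
    have s1: "s*(1-e) = 0" using se by (simp add: algebra_simps)
    have s2: "(1-e)*s = 0" using es by (simp add: algebra_simps)
    have "e*y*(1-e) = b*s*y*(1-e)" using e1 by simp
    also have "\<dots> = b*(y*s)*(1-e)" by (simp add: mult.assoc ys)
    also have "\<dots> = b*(y*(s*(1-e)))" by (simp only: mult.assoc)
    finally have A: "e*y*(1-e) = 0" using s1 by simp
    have "(1-e)*y*e = (1-e)*y*(s*b)" unfolding e_def by simp
    also have "\<dots> = (1-e)*(y*s)*b" by (simp only: mult.assoc)
    also have "\<dots> = (1-e)*(s*y)*b" using ys by simp
    also have "\<dots> = ((1-e)*s)*y*b" by (simp only: mult.assoc)
    finally have B: "(1-e)*y*e = 0" using s2 by simp
    have "e*y*(1-e) = e*y - e*y*e" by (simp only: right_diff_distrib mult_1_right)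
    with A have "e*y = e*y*e" by simp
    moreover have "(1-e)*y*e = y*e - e*y*e" by (simp only: left_diff_distrib mult_1_left)
    with B have "y*e = e*y*e" by simp
    ultimately show "e*y = y*e" by simp
  qed
  define p where "p = 1 - e"
  have pc: "p \<in> comm2 a" unfolding p_def by (intro comm2_diff comm2_one ec)
  have pp: "p*p = p" unfolding p_def using ee by (simp add: algebra_simps)
  have apq: "a*p = q" unfolding p_def a using se qe by (simp add: algebra_simps)
  have ap: "a*p = p*a" using pc unfolding comm2_def comm_def by auto
  obtain n where n: "n \<ge> 1" "q^n \<in> jacobson" using qj unfolding jsharp_def by blast
  have J: "a^n*p \<in> jacobson" using comm_pow_mult[OF ap pp n(1)] apq n(2) by simp
  define t where "t = b*e"
  have eb: "e*b = b*e" unfolding e_def by (simp add: mult.assoc[symmetric] bs)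
  have st: "s*t = e" unfolding t_def e_def by (simp only: mult.assoc[symmetric] sbs')
  have ts: "t*s = e" unfolding t_def by (simp only: mult.assoc es e1)
  have "e*t = (e*b)*e" unfolding t_def by (simp only: mult.assoc)
  also have "\<dots> = b*(e*e)" using eb by (simp add: mult.assoc)
  finally have et: "e*t = t" unfolding t_def using ee by simp
  have "t*e = b*(e*e)" unfolding t_def by (simp only: mult.assoc)
  then have te: "t*e = t" unfolding t_def using ee by simp
  have s1: "s*(1-e) = 0" using se by (simp add: right_diff_distrib)
  have s2: "(1-e)*s = 0" using es by (simp add: left_diff_distrib)
  have t1: "(1-e)*t = 0" using et by (simp add: left_diff_distrib)
  have t2: "t*(1-e) = 0" using te by (simp add: right_diff_distrib)
  have f1: "(1-e)*(1-e) = 1-e" using pp unfolding p_def .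
  have q1: "(1-e)*q = q" using eq by (simp add: left_diff_distrib)
  define u where "u = s + (1 - e)"
  have "u * (t + (1 - e)) = s*t + s*(1-e) + ((1-e)*t + (1-e)*(1-e))"
    unfolding u_def by (simp only: distrib_left distrib_right add_ac)
  then have u1: "u * (t + (1 - e)) = 1" using st s1 t1 f1 by simp
  have "(t + (1 - e)) * u = t*s + t*(1-e) + ((1-e)*s + (1-e)*(1-e))"
    unfolding u_def by (simp only: distrib_left distrib_right add_ac)
  then have u2: "(t + (1 - e)) * u = 1" using ts t2 s2 f1 by simp
  have uu: "unit_el u" unfolding unit_el_def using u1 u2 by blast
  have "u * (1+q) = s + (1-e) + (s*q + (1-e)*q)"
    unfolding u_def by (simp only: distrib_left distrib_right mult_1_right add_ac)
  then have "u * (1+q) = a + p" using sq q1 unfolding a p_def by (simp add: algebra_simps)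
  moreover have "unit_el (u * (1+q))" by (rule unit_mult[OF uu one_plus_jsharp[OF qj]])
  ultimately have "unit_el (a+p)" by simp
  show "pseudopolar a" unfolding pseudopolar_def
    by (rule exI[of _ p], rule exI[of _ n]) (intro conjI n(1) pp pc J \<open>unit_el (a+p)\<close>)
qed

end
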